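(* Let $A$ and $B$ be alternating sign hypermatrices of order $n$. Then $A\preceq_B B$ if and only if $\Xi(A)_{i,j,k}\ge \Xi(B)_{i,j,k}$ for all $i,j,k\in\{0,1,\dots,n\}$.
   Context: Let $[n]=\{1,\dots,n\}$. A hypermatrix of order $n$ is an integer array $A=(A_{i,j,k})_{i,j,k\in[n]}$; its lines are the $n$-tuples obtained by fixing two of the three indices. An alternating sign hypermatrix of order $n$ is a hypermatrix with entries in $\{0,1,-1\}$ such that in every line the nonzero entries alternate in sign, beginning and ending with $+1$. $\Xi(A)$ is the array indexed by $\{0,\dots,n\}^3$ with $\Xi(A)_{i,j,k}=\sum_{a=1}^i\sum_{b=1}^j\sum_{c=1}^k A_{a,b,c}$. For $i_1<i_2$, $j_1<j_2$, $k_1<k_2$ in $[n]$, the positive T-block on $\{i_1,i_2\}\times\{j_1,j_2\}\times\{k_1,k_2\}$ is the hypermatrix that is zero outside these eight positions, with entries $+1$ at $(i_1,j_1,k_1),(i_2,j_2,k_1),(i_1,j_2,k_2),(i_2,j_1,k_2)$ and $-1$ at $(i_1,j_2,k_1),(i_2,j_1,k_1),(i_1,j_1,k_2),(i_2,j_2,k_2)$. For hypermatrices $A,B$ of order $n$, the Bruhat order is $A\preceq_B B$ iff $A-B$ is a (possibly empty) sum of positive T-blocks. *)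

theory Defs
  imports Main
begin

text \<open>A hypermatrix of order n is represented as a function nat => nat => nat => int;
  only the entries with indices in {1..n} are relevant; we require it to vanish elsewhere.\<close>
type_synonym hmat = "nat \<Rightarrow> nat \<Rightarrow> nat \<Rightarrow> int"

definition supported :: "nat \<Rightarrow> hmat \<Rightarrow> bool" where
  "supported n A \<longleftrightarrow> (\<forall>i j k. \<not> (i \<in> {1..n} \<and> j \<in> {1..n} \<and> k \<in> {1..n}) \<longrightarrow> A i j k = 0)"

definition alt_pm :: "int list \<Rightarrow> bool" where
  "alt_pm xs \<longleftrightarrow> odd (length xs) \<and> (\<forall>k < length xs. xs ! k = (if even k then 1 else -1))"

definition ash_line :: "int list \<Rightarrow> bool" where
  "ash_line xs \<longleftrightarrow> set xs \<subseteq> {0, 1, -1} \<and> alt_pm (filter (\<lambda>x. x \<noteq> 0) xs)"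

definition ASHM :: "nat \<Rightarrow> hmat \<Rightarrow> bool" where
  "ASHM n A \<longleftrightarrow> supported n A \<and>
     (\<forall>a\<in>{1..n}. \<forall>b\<in>{1..n}.
        ash_line (map (\<lambda>t. A t a b) [1..<n+1]) \<and>
        ash_line (map (\<lambda>t. A a t b) [1..<n+1]) \<and>
        ash_line (map (\<lambda>t. A a b t) [1..<n+1]))"

definition Xi :: "hmat \<Rightarrow> nat \<Rightarrow> nat \<Rightarrow> nat \<Rightarrow> int" where
  "Xi A i j k = (\<Sum>a=1..i. \<Sum>b=1..j. \<Sum>c=1..k. A a b c)"

definition pos_T_block :: "nat \<Rightarrow> nat \<Rightarrow> nat \<Rightarrow> nat \<Rightarrow> nat \<Rightarrow> nat \<Rightarrow> hmat" where
  "pos_T_block i1 i2 j1 j2 k1 k2 = (\<lambda>i j k.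
     if (i, j, k) \<in> {(i1,j1,k1), (i2,j2,k1), (i1,j2,k2), (i2,j1,k2)} then 1
     else if (i, j, k) \<in> {(i1,j2,k1), (i2,j1,k1), (i1,j1,k2), (i2,j2,k2)} then -1
     else 0)"

definition valid_T :: "nat \<Rightarrow> nat \<times> nat \<times> nat \<times> nat \<times> nat \<times> nat \<Rightarrow> bool" where
  "valid_T n t = (case t of (i1, i2, j1, j2, k1, k2) \<Rightarrow>
     1 \<le> i1 \<and> i1 < i2 \<and> i2 \<le> n \<and> 1 \<le> j1 \<and> j1 < j2 \<and> j2 \<le> n \<and>
     1 \<le> k1 \<and> k1 < k2 \<and> k2 \<le> n)"

definition T_of :: "nat \<times> nat \<times> nat \<times> nat \<times> nat \<times> nat \<Rightarrow> hmat" where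
  "T_of t = (case t of (i1, i2, j1, j2, k1, k2) \<Rightarrow> pos_T_block i1 i2 j1 j2 k1 k2)"

definition bruhat_le :: "nat \<Rightarrow> hmat \<Rightarrow> hmat \<Rightarrow> bool" where
  "bruhat_le n A B \<longleftrightarrow> (\<exists>ts. (\<forall>t\<in>set ts. valid_T n t) \<and>
     (\<forall>i j k. A i j k - B i j k = (\<Sum>t\<leftarrow>ts. T_of t i j k)))"

end

theory Submission
  imports Defs
begin

definition dl :: "nat \<Rightarrow> nat \<Rightarrow> nat \<Rightarrow> int" where
  "dl x y a = (if a = x then 1 else 0) - (if a = y then 1 else 0)"

lemma alt_list_sum: "sum_list (map (\<lambda>k. if even k then (1::int) else -1) [0..<m]) = (if odd m then 1 else 0)"
  by (induction m) auto

lemma alt_pm_sum: assumes "alt_pm xs" shows "sum_list xs = 1"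
proof -
  have "xs = map (\<lambda>k. if even k then (1::int) else -1) [0..<length xs]"
    by (rule nth_equalityI) (use assms in \<open>auto simp: alt_pm_def\<close>)
  then have "sum_list xs = (if odd (length xs) then 1 else 0)"
    by (metis alt_list_sum)
  then show ?thesis using assms by (simp add: alt_pm_def)
qed

lemma filter_nz_sum: "sum_list (filter (\<lambda>x. x \<noteq> 0) xs) = sum_list (xs::int list)"
  by (induction xs) auto

lemma ash_line_sum: "ash_line xs \<Longrightarrow> sum_list xs = 1"
  unfolding ash_line_def using alt_pm_sum filter_nz_sum by metis

lemma line_sum: "ash_line (map f [1..<n+1]) \<Longrightarrow> (\<Sum>t=1..n. f t) = (1::int)"
  using ash_line_sum[of "map f [1..<n+1]"]
  by (metis atLeastLessThanSuc_atLeastAtMost Suc_eq_plus1 sum_set_upt_conv_sum_list_nat set_upt)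

lemma Xi_diff: "Xi A i j k - Xi B i j k = Xi (\<lambda>a b c. A a b c - B a b c) i j k"
  by (simp add: Xi_def sum_subtractf)

lemma Xi_sumlist: "Xi (\<lambda>a b c. \<Sum>t\<leftarrow>ts. f t a b c) i j k = (\<Sum>t\<leftarrow>ts. Xi (f t) i j k)"
  by (induction ts) (simp_all add: Xi_def sum.distrib)

lemma T_fact: "i1 < i2 \<Longrightarrow> j1 < j2 \<Longrightarrow> k1 < k2 \<Longrightarrow>
  pos_T_block i1 i2 j1 j2 k1 k2 a b c = dl i1 i2 a * dl j1 j2 b * dl k1 k2 c"
  by (auto simp: pos_T_block_def dl_def)

lemma Xi_prod: "Xi (\<lambda>a b c. f a * g b * h c) i j k = (\<Sum>a=1..i. f a) * (\<Sum>b=1..j. g b) * (\<Sum>c=1..k. h c)"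
  by (simp add: Xi_def sum_distrib_left[symmetric] sum_distrib_right[symmetric])

lemma dl_sum: "1 \<le> x \<Longrightarrow> x < y \<Longrightarrow> (\<Sum>a=1..i. dl x y a) \<ge> 0"
  by (simp add: dl_def sum_subtractf sum.delta')

lemma Xi_T_nonneg: "valid_T n t \<Longrightarrow> Xi (T_of t) i j k \<ge> 0"
proof -
  assume v: "valid_T n t"
  obtain i1 i2 j1 j2 k1 k2 where t: "t = (i1, i2, j1, j2, k1, k2)" by (cases t) auto
  have "T_of t = (\<lambda>a b c. dl i1 i2 a * dl j1 j2 b * dl k1 k2 c)"
    using v by (auto intro!: ext simp: t T_of_def valid_T_def T_fact)
  then have "Xi (T_of t) i j k = (\<Sum>a=1..i. dl i1 i2 a) * (\<Sum>a=1..j. dl j1 j2 a) * (\<Sum>a=1..k. dl k1 k2 a)"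
    by (simp add: Xi_prod)
  moreover have "(\<Sum>a=1..i. dl i1 i2 a) \<ge> 0" "(\<Sum>a=1..j. dl j1 j2 a) \<ge> 0" "(\<Sum>a=1..k. dl k1 k2 a) \<ge> 0"
    using v dl_sum[of i1 i2 i] dl_sum[of j1 j2 j] dl_sum[of k1 k2 k] by (auto simp: t valid_T_def)
  ultimately show ?thesis by simp
qed

lemma diff1:
  fixes p :: "nat \<Rightarrow> int"
  assumes supp: "\<And>a. a < 1 \<or> a > n \<Longrightarrow> p a = 0" and tot: "(\<Sum>a=1..n. p a) = 0"
  shows "(\<Sum>i\<in>{1..<n}. (\<Sum>a'=1..i. p a') * dl i (Suc i) a) = p a"
proof -
  define P where "P i = (\<Sum>a'=1..i. p a')" for i
  have P0: "P 0 = 0" by (simp add: P_def)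
  have PS: "P (Suc i) = P i + p (Suc i)" for i by (simp add: P_def)
  have Pn: "P n = 0" using tot by (simp add: P_def)
  have "(\<Sum>i\<in>{1..<n}. P i * dl i (Suc i) a)
      = (\<Sum>i\<in>{1..<n}. if a = i then P i else 0) - (\<Sum>i\<in>{1..<n}. if a = Suc i then P i else 0)"
    unfolding sum_subtractf[symmetric] by (rule sum.cong) (auto simp: dl_def)
  also have "\<dots> = p a"
  proof (cases a)
    case 0
    then show ?thesis using supp[of 0] by simp
  next
    case (Suc a0)
    have e: "(\<Sum>i\<in>{1..<n}. if a = Suc i then P i else 0) = (\<Sum>i\<in>{1..<n}. if a0 = i then P i else 0)"
      using Suc by simp
    show ?thesis
      unfolding e using Suc supp[of a] PS[of a0] P0 Pn
      by (cases "a0 = 0"; cases "a < n"; cases "a = n") (auto simp: sum.delta)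
  qed
  finally show ?thesis by (simp add: P_def)
qed

lemma exists_ts:
  assumes "finite I" "\<forall>x\<in>I. valid_T n (\<tau> x) \<and> w x \<ge> 0"
  shows "\<exists>ts. (\<forall>t\<in>set ts. valid_T n t) \<and>
     (\<forall>i j k. (\<Sum>t\<leftarrow>ts. T_of t i j k) = (\<Sum>x\<in>I. w x * T_of (\<tau> x) i j k))"
  using assms
proof (induction I rule: finite_induct)
  case empty
  then show ?case by (intro exI[of _ "[]"]) simp
next
  case (insert x F)
  then obtain ts where ts: "\<forall>t\<in>set ts. valid_T n t"
    "\<forall>i j k. (\<Sum>t\<leftarrow>ts. T_of t i j k) = (\<Sum>x\<in>F. w x * T_of (\<tau> x) i j k)" by auto
  show ?case
  proof (intro exI[of _ "ts @ replicate (nat (w x)) (\<tau> x)"] conjI allI)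
    show "\<forall>t\<in>set (ts @ replicate (nat (w x)) (\<tau> x)). valid_T n t"
      using ts insert.prems by auto
    fix i j k
    show "(\<Sum>t\<leftarrow>ts @ replicate (nat (w x)) (\<tau> x). T_of t i j k) = (\<Sum>x\<in>insert x F. w x * T_of (\<tau> x) i j k)"
      using ts insert by (simp add: sum_list_replicate)
  qed
qed

lemma swap3: "(\<Sum>a\<in>X. \<Sum>b\<in>Y. \<Sum>c\<in>Z. f a b c) = (\<Sum>c\<in>Z. \<Sum>a\<in>X. \<Sum>b\<in>Y. (f a b c :: int))"
proof -
  have "(\<Sum>a\<in>X. \<Sum>b\<in>Y. \<Sum>c\<in>Z. f a b c) = (\<Sum>a\<in>X. \<Sum>c\<in>Z. \<Sum>b\<in>Y. f a b c)"
    by (rule sum.cong[OF refl], rule sum.swap)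
  also have "\<dots> = (\<Sum>c\<in>Z. \<Sum>a\<in>X. \<Sum>b\<in>Y. f a b c)" by (rule sum.swap)
  finally show ?thesis .
qed

lemma ASHM_sums:
  assumes "ASHM n A"
  shows "(\<Sum>t=1..n. A t b c) = (if b \<in> {1..n} \<and> c \<in> {1..n} then 1 else 0)"
    and "(\<Sum>t=1..n. A b t c) = (if b \<in> {1..n} \<and> c \<in> {1..n} then 1 else 0)"
    and "(\<Sum>t=1..n. A b c t) = (if b \<in> {1..n} \<and> c \<in> {1..n} then 1 else 0)"
proof -
  have s: "supported n A" using assms by (simp add: ASHM_def)
  show "(\<Sum>t=1..n. A t b c) = (if b \<in> {1..n} \<and> c \<in> {1..n} then 1 else 0)"
  proof (cases "b \<in> {1..n} \<and> c \<in> {1..n}")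
    case True
    then show ?thesis using assms line_sum[of "\<lambda>t. A t b c" n] by (simp add: ASHM_def)
  next
    case False
    then show ?thesis using s unfolding supported_def by auto
  qed
  show "(\<Sum>t=1..n. A b t c) = (if b \<in> {1..n} \<and> c \<in> {1..n} then 1 else 0)"
  proof (cases "b \<in> {1..n} \<and> c \<in> {1..n}")
    case True
    then show ?thesis using assms line_sum[of "\<lambda>t. A b t c" n] by (simp add: ASHM_def)
  next
    case False
    then show ?thesis using s unfolding supported_def by auto
  qed
  show "(\<Sum>t=1..n. A b c t) = (if b \<in> {1..n} \<and> c \<in> {1..n} then 1 else 0)"
  proof (cases "b \<in> {1..n} \<and> c \<in> {1..n}")
    case True
    then show ?thesis using assms line_sum[of "\<lambda>t. A b c t" n] by (simp add: ASHM_def)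
  next
    case False
    then show ?thesis using s unfolding supported_def by auto
  qed
qed

lemma key:
  assumes AA: "ASHM n A" and BB: "ASHM n B"
  defines "D \<equiv> (\<lambda>a b c. A a b c - B a b c)"
  shows "D a b c = (\<Sum>x\<in>{1..<n}\<times>{1..<n}\<times>{1..<n}.
     (case x of (i,j,k) \<Rightarrow> Xi D i j k) * T_of (case x of (i,j,k) \<Rightarrow> (i,Suc i,j,Suc j,k,Suc k)) a b c)"
proof -
  let ?I = "{1..<n}"
  have sA: "supported n A" and sB: "supported n B" using AA BB by (auto simp: ASHM_def)
  have Dz: "D a' b' c' = 0" if "\<not> (a' \<in> {1..n} \<and> b' \<in> {1..n} \<and> c' \<in> {1..n})" for a' b' c'
    using sA sB that unfolding supported_def D_def by auto
  have D1: "(\<Sum>t=1..n. D t y z) = 0" for y z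
    using ASHM_sums(1)[OF AA, of y z] ASHM_sums(1)[OF BB, of y z] by (simp add: D_def sum_subtractf)
  have D2: "(\<Sum>t=1..n. D y t z) = 0" for y z
    using ASHM_sums(2)[OF AA, of y z] ASHM_sums(2)[OF BB, of y z] by (simp add: D_def sum_subtractf)
  have D3: "(\<Sum>t=1..n. D y z t) = 0" for y z
    using ASHM_sums(3)[OF AA, of y z] ASHM_sums(3)[OF BB, of y z] by (simp add: D_def sum_subtractf)
  define G where "G i j = (\<Sum>a'=1..i. \<Sum>b'=1..j. D a' b' c)" for i j
  define H where "H i = (\<Sum>a'=1..i. D a' b c)" for i
  have stepk: "(\<Sum>k\<in>?I. Xi D i j k * dl k (Suc k) c) = G i j" for i j
  proof -
    have F: "Xi D i j k = (\<Sum>c'=1..k. \<Sum>a'=1..i. \<Sum>b'=1..j. D a' b' c')" for k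
      unfolding Xi_def by (rule swap3)
    have "(\<Sum>k\<in>?I. (\<Sum>c'=1..k. (\<lambda>c'. \<Sum>a'=1..i. \<Sum>b'=1..j. D a' b' c') c') * dl k (Suc k) c)
        = (\<lambda>c'. \<Sum>a'=1..i. \<Sum>b'=1..j. D a' b' c') c"
    proof (rule diff1)
      show "(\<Sum>c'=1..n. \<Sum>a'=1..i. \<Sum>b'=1..j. D a' b' c') = 0"
        using swap3[where f="\<lambda>a' b' c'. D a' b' c'" and X="{1..i}" and Y="{1..j}" and Z="{1..n}"] D3 by simp
    next
      fix c' :: nat assume "c' < 1 \<or> c' > n"
      then show "(\<Sum>a'=1..i. \<Sum>b'=1..j. D a' b' c') = 0" using Dz by auto
    qed
    then show ?thesis unfolding F G_def by simp
  qed
  have stepj: "(\<Sum>j\<in>?I. G i j * dl j (Suc j) b) = H i" for i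
  proof -
    have F: "G i j = (\<Sum>b'=1..j. \<Sum>a'=1..i. D a' b' c)" for j
      unfolding G_def by (rule sum.swap)
    have "(\<Sum>j\<in>?I. (\<Sum>b'=1..j. (\<lambda>b'. \<Sum>a'=1..i. D a' b' c) b') * dl j (Suc j) b)
        = (\<lambda>b'. \<Sum>a'=1..i. D a' b' c) b"
    proof (rule diff1)
      show "(\<Sum>b'=1..n. \<Sum>a'=1..i. D a' b' c) = 0"
        using sum.swap[where g="\<lambda>b' a'. D a' b' c" and A="{1..n}" and B="{1..i}"] D2 by simp
    next
      fix b' :: nat assume "b' < 1 \<or> b' > n"
      then show "(\<Sum>a'=1..i. D a' b' c) = 0" using Dz by auto
    qed
    then show ?thesis unfolding F H_def by simp
  qed
  have stepi: "(\<Sum>i\<in>?I. H i * dl i (Suc i) a) = D a b c"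
    unfolding H_def
  proof (rule diff1)
    show "(\<Sum>a'=1..n. D a' b c) = 0" using D1 by simp
  next
    fix a' :: nat assume "a' < 1 \<or> a' > n"
    then show "D a' b c = 0" using Dz by auto
  qed
  have T: "T_of (i,Suc i,j,Suc j,k,Suc k) a b c = dl i (Suc i) a * dl j (Suc j) b * dl k (Suc k) c" for i j k
    by (simp add: T_of_def T_fact)
  have "(\<Sum>x\<in>?I\<times>?I\<times>?I.
     (case x of (i,j,k) \<Rightarrow> Xi D i j k) * T_of (case x of (i,j,k) \<Rightarrow> (i,Suc i,j,Suc j,k,Suc k)) a b c)
     = (\<Sum>i\<in>?I. \<Sum>j\<in>?I. \<Sum>k\<in>?I. Xi D i j k * (dl i (Suc i) a * dl j (Suc j) b * dl k (Suc k) c))"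
    unfolding sum.cartesian_product by (rule sum.cong[OF refl]) (auto simp: T)
  also have "\<dots> = (\<Sum>i\<in>?I. (\<Sum>j\<in>?I. (\<Sum>k\<in>?I. Xi D i j k * dl k (Suc k) c) * dl j (Suc j) b) * dl i (Suc i) a)"
    by (simp add: sum_distrib_left sum_distrib_right mult_ac)
  also have "\<dots> = D a b c" by (simp only: stepk stepj stepi)
  finally show ?thesis by simp
qed

theorem mainTheorem5:
  fixes n :: nat and A B :: hmat
  assumes "ASHM n A" and "ASHM n B"
  shows "bruhat_le n A B \<longleftrightarrow> (\<forall>i\<le>n. \<forall>j\<le>n. \<forall>k\<le>n. Xi A i j k \<ge> Xi B i j k)"
proof
  assume "bruhat_le n A B"
  then obtain ts where v: "\<forall>t\<in>set ts. valid_T n t"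
    and e: "\<forall>i j k. A i j k - B i j k = (\<Sum>t\<leftarrow>ts. T_of t i j k)"
    unfolding bruhat_le_def by blast
  have eq: "(\<lambda>a b c. A a b c - B a b c) = (\<lambda>a b c. \<Sum>t\<leftarrow>ts. T_of t a b c)"
    using e by (intro ext) simp
  show "\<forall>i\<le>n. \<forall>j\<le>n. \<forall>k\<le>n. Xi A i j k \<ge> Xi B i j k"
  proof (intro allI impI)
    fix i j k
    have "Xi A i j k - Xi B i j k = (\<Sum>t\<leftarrow>ts. Xi (T_of t) i j k)"
      unfolding Xi_diff eq Xi_sumlist ..
    also have "\<dots> \<ge> 0" using v Xi_T_nonneg by (intro sum_list_nonneg) auto
    finally show "Xi A i j k \<ge> Xi B i j k" by simp
  qed
next
  assume h: "\<forall>i\<le>n. \<forall>j\<le>n. \<forall>k\<le>n. Xi A i j k \<ge> Xi B i j k"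
  define D where "D = (\<lambda>a b c. A a b c - B a b c)"
  let ?I = "{1..<n}\<times>{1..<n}\<times>{1..<n}"
  let ?w = "\<lambda>x. case x of (i,j,k) \<Rightarrow> Xi D i j k"
  let ?\<tau> = "\<lambda>x. case x of (i,j,k) \<Rightarrow> (i,Suc i,j,Suc j,k,Suc k)"
  have "\<forall>x\<in>?I. valid_T n (?\<tau> x) \<and> ?w x \<ge> 0"
  proof
    fix x assume "x \<in> ?I"
    then obtain i j k where x: "x = (i,j,k)" "i \<in> {1..<n}" "j \<in> {1..<n}" "k \<in> {1..<n}" by auto
    have "Xi A i j k - Xi B i j k \<ge> 0" using h x by auto
    then have "Xi D i j k \<ge> 0" unfolding D_def Xi_diff .
    then show "valid_T n (?\<tau> x) \<and> ?w x \<ge> 0" using x by (auto simp: valid_T_def)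
  qed
  then obtain ts where ts: "\<forall>t\<in>set ts. valid_T n t"
    "\<forall>i j k. (\<Sum>t\<leftarrow>ts. T_of t i j k) = (\<Sum>x\<in>?I. ?w x * T_of (?\<tau> x) i j k)"
    using exists_ts[of ?I n ?\<tau> ?w] by auto
  show "bruhat_le n A B"
    unfolding bruhat_le_def
  proof (intro exI[of _ ts] conjI allI)
    show "\<forall>t\<in>set ts. valid_T n t" by (rule ts(1))
    fix i j k
    show "A i j k - B i j k = (\<Sum>t\<leftarrow>ts. T_of t i j k)"
      using key[OF assms, of i j k] ts(2) unfolding D_def by simp
  qed
qed

end
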